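(* Let $-\infty\le a<b\le+\infty$ and let $w_0$ be a positive smooth function on $(a,b)$ all of whose moments $\int_a^bx^jw_0(x)dx$ exist, with $w_0(a)=w_0(b)=0$ (as limits if endpoints are infinite). Let $m\ge1$, $a<t_1<\cdots<t_m<b$, $\vec t=(t_1,\dots,t_m)$, and let $\omega_0,\dots,\omega_m$ be real with $\sum_{k=0}^\ell\omega_k\ge0$ for $\ell=0,\dots,m$, such that $$w(x;\vec t)=w_0(x)\Big(\omega_0+\sum_{k=1}^m\omega_k\theta(x-t_k)\Big),\qquad x\in[a,b],$$ is not identically zero. Then for $k=1,\dots,m$, $$\frac{\partial}{\partial t_k}\ln h_n(\vec t)=-R_{n,k}(\vec t)\quad(n\ge0),\qquad \frac{\partial}{\partial t_k}p(n,\vec t)=r_{n,k}(\vec t)\quad(n\ge1),$$ and consequently $$\frac{\partial}{\partial t_k}\ln\beta_n(\vec t)=R_{n-1,k}(\vec t)-R_{n,k}(\vec t)\quad(n\ge1),\qquad \frac{\partial}{\partial t_k}\alpha_n(\vec t)=r_{n,k}(\vec t)-r_{n+1,k}(\vec t).$$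
   Context: $\theta(y)=1$ for $y>0$ and $0$ otherwise. $P_n(z;\vec t)=z^n+p(n,\vec t)z^{n-1}+\cdots$ is the monic degree-$n$ polynomial orthogonal w.r.t. $w(\cdot;\vec t)$ on $[a,b]$: $\int_a^bP_jP_kw\,dx=h_k(\vec t)\delta_{jk}$, $h_k>0$; $p(0,\vec t):=0$. Recurrence: $zP_n=P_{n+1}+\alpha_nP_n+\beta_nP_{n-1}$, $\beta_n=h_n/h_{n-1}$, $\alpha_n=p(n,\vec t)-p(n+1,\vec t)$. For $k=1,\dots,m$: $R_{n,k}(\vec t):=\omega_kw_0(t_k)P_n(t_k;\vec t)^2/h_n(\vec t)$ and $r_{n,k}(\vec t):=\omega_kw_0(t_k)P_n(t_k;\vec t)P_{n-1}(t_k;\vec t)/h_{n-1}(\vec t)$, with $r_{0,k}:=0$. *)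

theory Defs
  imports "HOL-Analysis.Analysis" "HOL-Computational_Algebra.Polynomial"
begin

definition theta :: "real \<Rightarrow> real" where
  "theta y = (if y > 0 then 1 else 0)"

definition ivl :: "ereal \<Rightarrow> ereal \<Rightarrow> real set" where
  "ivl a b = {x. a < ereal x \<and> ereal x < b}"

definition wt :: "(real \<Rightarrow> real) \<Rightarrow> (nat \<Rightarrow> real) \<Rightarrow> nat \<Rightarrow> (nat \<Rightarrow> real) \<Rightarrow> real \<Rightarrow> real" where
  "wt w0 \<omega> m t x = w0 x * (\<omega> 0 + (\<Sum>k=1..m. \<omega> k * theta (x - t k)))"

text \<open>Integral over [a,b] (endpoints are a null set) against the weight W.\<close>
definition ip :: "ereal \<Rightarrow> ereal \<Rightarrow> (real \<Rightarrow> real) \<Rightarrow> (real \<Rightarrow> real) \<Rightarrow> real" where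
  "ip a b W f = (LINT x:ivl a b|lborel. f x * W x)"

definition OP :: "ereal \<Rightarrow> ereal \<Rightarrow> (real \<Rightarrow> real) \<Rightarrow> nat \<Rightarrow> real poly" where
  "OP a b W n = (THE P. degree P = n \<and> lead_coeff P = 1 \<and>
      (\<forall>j<n. ip a b W (\<lambda>x. poly P x * x ^ j) = 0))"

definition hn :: "ereal \<Rightarrow> ereal \<Rightarrow> (real \<Rightarrow> real) \<Rightarrow> nat \<Rightarrow> real" where
  "hn a b W n = ip a b W (\<lambda>x. (poly (OP a b W n) x)\<^sup>2)"

definition pc :: "ereal \<Rightarrow> ereal \<Rightarrow> (real \<Rightarrow> real) \<Rightarrow> nat \<Rightarrow> real" where
  "pc a b W n = (if n = 0 then 0 else coeff (OP a b W n) (n - 1))"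

definition beta :: "ereal \<Rightarrow> ereal \<Rightarrow> (real \<Rightarrow> real) \<Rightarrow> nat \<Rightarrow> real" where
  "beta a b W n = hn a b W n / hn a b W (n - 1)"

definition alpha :: "ereal \<Rightarrow> ereal \<Rightarrow> (real \<Rightarrow> real) \<Rightarrow> nat \<Rightarrow> real" where
  "alpha a b W n = pc a b W n - pc a b W (n + 1)"

definition RR :: "ereal \<Rightarrow> ereal \<Rightarrow> (real \<Rightarrow> real) \<Rightarrow> (nat \<Rightarrow> real) \<Rightarrow> nat \<Rightarrow> (nat \<Rightarrow> real) \<Rightarrow> nat \<Rightarrow> nat \<Rightarrow> real" where
  "RR a b w0 \<omega> m t n k =
     \<omega> k * w0 (t k) * (poly (OP a b (wt w0 \<omega> m t) n) (t k))\<^sup>2 / hn a b (wt w0 \<omega> m t) n"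

definition rr :: "ereal \<Rightarrow> ereal \<Rightarrow> (real \<Rightarrow> real) \<Rightarrow> (nat \<Rightarrow> real) \<Rightarrow> nat \<Rightarrow> (nat \<Rightarrow> real) \<Rightarrow> nat \<Rightarrow> nat \<Rightarrow> real" where
  "rr a b w0 \<omega> m t n k = (if n = 0 then 0 else
     \<omega> k * w0 (t k) * poly (OP a b (wt w0 \<omega> m t) n) (t k) * poly (OP a b (wt w0 \<omega> m t) (n - 1)) (t k)
       / hn a b (wt w0 \<omega> m t) (n - 1))"

end

theory Submission
  imports Defs
begin


definition Lf :: "(nat \<Rightarrow> real) \<Rightarrow> real poly \<Rightarrow> real" where
  "Lf \<mu> p = (\<Sum>i\<le>degree p. coeff p i * \<mu> i)"

lemma Lf_bound: "degree p \<le> K \<Longrightarrow> Lf \<mu> p = (\<Sum>i\<le>K. coeff p i * \<mu> i)"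
proof -
  assume "degree p \<le> K"
  have "(\<Sum>i\<le>K. coeff p i * \<mu> i) = (\<Sum>i\<le>degree p. coeff p i * \<mu> i)"
    by (rule sum.mono_neutral_right) (use \<open>degree p \<le> K\<close> in \<open>auto simp: coeff_eq_0\<close>)
  then show ?thesis by (simp add: Lf_def)
qed

lemma Lf_add: "Lf \<mu> (p + q) = Lf \<mu> p + Lf \<mu> q"
proof -
  let ?K = "max (degree p) (degree q)"
  have "degree (p + q) \<le> ?K" by (simp add: degree_add_le)
  then show ?thesis
    by (simp add: Lf_bound[of _ ?K] sum.distrib algebra_simps)
qed

lemma Lf_smult: "Lf \<mu> (smult c p) = c * Lf \<mu> p"
  by (simp add: Lf_bound[of _ "degree p"] sum_distrib_left algebra_simps)

lemma Lf_minus: "Lf \<mu> (- p) = - Lf \<mu> p"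
  using Lf_smult[of \<mu> "-1" p] by simp

lemma Lf_diff: "Lf \<mu> (p - q) = Lf \<mu> p - Lf \<mu> q"
  using Lf_add[of \<mu> p "-q"] Lf_minus[of \<mu> q] by simp

lemma Lf_0[simp]: "Lf \<mu> 0 = 0" by (simp add: Lf_def)

lemma Lf_sum: "Lf \<mu> (\<Sum>j\<in>A. f j) = (\<Sum>j\<in>A. Lf \<mu> (f j))"
  by (induction A rule: infinite_finite_induct) (auto simp: Lf_add)

fun GS :: "(nat \<Rightarrow> real) \<Rightarrow> nat \<Rightarrow> real poly" where
  "GS \<mu> 0 = 1"
| "GS \<mu> (Suc n) = monom 1 (Suc n) -
     (\<Sum>j\<le>n. smult (Lf \<mu> (monom 1 (Suc n) * GS \<mu> j) / Lf \<mu> (GS \<mu> j * GS \<mu> j)) (GS \<mu> j))"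

lemma degree_sum_bound: "(\<And>j. j \<in> A \<Longrightarrow> degree (f j) \<le> n) \<Longrightarrow> degree (sum f A) \<le> n"
  by (induction A rule: infinite_finite_induct) (auto intro: order.trans[OF degree_add_le_max])

lemma GS_deg_lead: "degree (GS \<mu> n) \<le> n \<and> coeff (GS \<mu> n) n = 1"
proof (induction n rule: less_induct)
  case (less n)
  show ?case
  proof (cases n)
    case 0 then show ?thesis by simp
  next
    case (Suc n')
    have dj: "degree (GS \<mu> j) \<le> n'" if "j \<le> n'" for j
      using less[of j] that Suc by auto
    have "degree (GS \<mu> n) \<le> n"
      unfolding Suc GS.simps
      apply (rule order.trans[OF degree_diff_le_max])
      apply (simp add: degree_monom_eq)
      apply (rule degree_sum_bound)
      using dj by (meson atMost_iff degree_smult_le le_SucI order.trans)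
    moreover have "coeff (GS \<mu> j) (Suc n') = 0" if "j \<le> n'" for j
      using dj[OF that] by (simp add: coeff_eq_0)
    ultimately show ?thesis using Suc by (simp add: coeff_sum)
  qed
qed

lemma GS_degree: "degree (GS \<mu> n) = n"
proof -
  have "coeff (GS \<mu> n) n \<noteq> 0" using GS_deg_lead[of \<mu> n] by simp
  then have "n \<le> degree (GS \<mu> n)" by (rule le_degree)
  then show ?thesis using GS_deg_lead[of \<mu> n] by simp
qed

lemma GS_lead: "coeff (GS \<mu> n) n = 1"
  using GS_deg_lead by blast

lemma GS_nz: "GS \<mu> n \<noteq> 0"
  using GS_lead[of \<mu> n] by auto

definition PD :: "(nat \<Rightarrow> real) \<Rightarrow> bool" where
  "PD \<mu> \<longleftrightarrow> (\<forall>p. p \<noteq> 0 \<longrightarrow> Lf \<mu> (p * p) > 0)"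

lemma GS_orth: "PD \<mu> \<Longrightarrow> j < n \<Longrightarrow> Lf \<mu> (GS \<mu> n * GS \<mu> j) = 0"
proof (induction n arbitrary: j rule: less_induct)
  case (less n)
  then obtain n' where n: "n = Suc n'" by (cases n) auto
  have jn: "j \<le> n'" using less n by simp
  define c where "c l = Lf \<mu> (monom 1 (Suc n') * GS \<mu> l) / Lf \<mu> (GS \<mu> l * GS \<mu> l)" for l
  have o: "Lf \<mu> (GS \<mu> l * GS \<mu> j) = 0" if "l \<le> n'" "l \<noteq> j" for l
  proof (cases "j < l")
    case True then show ?thesis using less.IH[of l j] less.prems that n by simp
  next
    case False
    then have "Lf \<mu> (GS \<mu> j * GS \<mu> l) = 0" using less.IH[of j l] less.prems that n jn by simp
    then show ?thesis by (simp add: mult.commute)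
  qed
  have pos: "Lf \<mu> (GS \<mu> j * GS \<mu> j) \<noteq> 0"
    using less.prems(1) GS_nz[of \<mu> j] unfolding PD_def by (metis less_irrefl)
  have "GS \<mu> n * GS \<mu> j = monom 1 (Suc n') * GS \<mu> j - (\<Sum>l\<le>n'. smult (c l) (GS \<mu> l * GS \<mu> j))"
    by (simp add: n c_def left_diff_distrib sum_distrib_right)
  then have "Lf \<mu> (GS \<mu> n * GS \<mu> j) = Lf \<mu> (monom 1 (Suc n') * GS \<mu> j) - (\<Sum>l\<le>n'. c l * Lf \<mu> (GS \<mu> l * GS \<mu> j))"
    by (simp add: Lf_diff Lf_sum Lf_smult)
  also have "(\<Sum>l\<le>n'. c l * Lf \<mu> (GS \<mu> l * GS \<mu> j)) = c j * Lf \<mu> (GS \<mu> j * GS \<mu> j) + (\<Sum>l\<in>{..n'} - {j}. c l * Lf \<mu> (GS \<mu> l * GS \<mu> j))"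
    by (rule sum.remove) (use jn in auto)
  also have "(\<Sum>l\<in>{..n'} - {j}. c l * Lf \<mu> (GS \<mu> l * GS \<mu> j)) = 0"
    by (rule sum.neutral) (use o in auto)
  finally show ?case using pos by (simp add: c_def)
qed

lemma span_GS: "degree q \<le> n \<Longrightarrow> \<exists>d. q = (\<Sum>j\<le>n. smult (d j) (GS \<mu> j))"
proof (induction n arbitrary: q)
  case 0
  then have "q = [:coeff q 0:]" using degree_0_id[of q] by simp
  then have "q = smult (coeff q 0) (GS \<mu> 0)" by (metis GS.simps(1) mult.right_neutral one_pCons smult_0_right smult_pCons)
  then show ?case by (intro exI[of _ "\<lambda>_. coeff q 0"]) simp
next
  case (Suc n)
  define r where "r = q - smult (coeff q (Suc n)) (GS \<mu> (Suc n))"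
  have "degree r \<le> n"
  proof (rule degree_le, intro allI impI)
    fix i assume "n < i"
    then show "coeff r i = 0"
    proof (cases "i = Suc n")
      case True then show ?thesis using GS_lead[of \<mu> "Suc n"] by (simp add: r_def del: GS.simps)
    next
      case False
      then have "i > Suc n" using \<open>n < i\<close> by simp
      then show ?thesis using Suc.prems GS_degree[of \<mu> "Suc n"]
        by (simp add: r_def coeff_eq_0 del: GS.simps)
    qed
  qed
  then obtain d where d: "r = (\<Sum>j\<le>n. smult (d j) (GS \<mu> j))" using Suc.IH by blast
  define d' where "d' j = (if j = Suc n then coeff q (Suc n) else d j)" for j
  have "(\<Sum>j\<le>Suc n. smult (d' j) (GS \<mu> j)) = r + smult (coeff q (Suc n)) (GS \<mu> (Suc n))"
    by (simp add: d d'_def)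
  also have "\<dots> = q" by (simp add: r_def)
  finally show ?case by metis
qed

lemma GS_orth_low: assumes "PD \<mu>" "degree q < n \<or> q = 0" shows "Lf \<mu> (GS \<mu> n * q) = 0"
proof (cases "q = 0")
  case True then show ?thesis by simp
next
  case False
  then have dq: "degree q < n" using assms by auto
  then obtain n' where n: "n = Suc n'" by (cases n) auto
  obtain d where d: "q = (\<Sum>j\<le>n'. smult (d j) (GS \<mu> j))" using span_GS[of q n'] dq n by auto
  have "Lf \<mu> (GS \<mu> n * q) = (\<Sum>j\<le>n'. d j * Lf \<mu> (GS \<mu> n * GS \<mu> j))"
    by (simp add: d sum_distrib_left Lf_sum Lf_smult)
  also have "\<dots> = 0" using GS_orth[OF assms(1)] n by (simp del: GS.simps)
  finally show ?thesis .
qed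

lemma OP_GS: assumes "PD \<mu>"
  shows "(THE P. degree P = n \<and> lead_coeff P = 1 \<and> (\<forall>j<n. Lf \<mu> (P * monom 1 j) = 0)) = GS \<mu> n"
proof (rule the_equality)
  show "degree (GS \<mu> n) = n \<and> lead_coeff (GS \<mu> n) = 1 \<and> (\<forall>j<n. Lf \<mu> (GS \<mu> n * monom 1 j) = 0)"
    using GS_orth_low[OF assms] by (simp add: GS_degree GS_lead degree_monom_eq)
next
  fix P assume P: "degree P = n \<and> lead_coeff P = 1 \<and> (\<forall>j<n. Lf \<mu> (P * monom 1 j) = 0)"
  define R where "R = P - GS \<mu> n"
  have cR: "coeff R i = 0" if "i \<ge> n" for i
  proof (cases "i = n")
    case True
    have "coeff P n = 1" using P by metis
    then show ?thesis using True by (simp add: R_def GS_lead)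
  next
    case False then show ?thesis using P that GS_degree[of \<mu> n] by (simp add: R_def coeff_eq_0)
  qed
  have Rsum: "R = (\<Sum>j<n. smult (coeff R j) (monom 1 j))"
  proof (rule poly_eqI)
    fix i show "coeff R i = coeff (\<Sum>j<n. smult (coeff R j) (monom 1 j)) i"
    proof (cases "i < n")
      case True
      have "(\<Sum>j<n. coeff (smult (coeff R j) (monom 1 j)) i) = (\<Sum>j<n. if j = i then coeff R j else 0)"
        by (rule sum.cong) auto
      then show ?thesis using True by (simp add: coeff_sum)
    qed (use cR[of i] in \<open>auto simp: coeff_sum\<close>)
  qed
  have "Lf \<mu> (P * R) = 0"
    by (subst Rsum) (simp add: sum_distrib_left Lf_sum Lf_smult P)
  moreover have "Lf \<mu> (GS \<mu> n * R) = 0"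
    by (subst Rsum) (simp add: sum_distrib_left Lf_sum Lf_smult GS_orth_low[OF assms] degree_monom_eq)
  ultimately have "Lf \<mu> (R * R) = 0"
    by (metis Lf_diff R_def diff_zero left_diff_distrib)
  then have "R = 0" using assms unfolding PD_def by fastforce
  then show "P = GS \<mu> n" by (simp add: R_def)
qed



definition pder :: "(real \<Rightarrow> real poly) \<Rightarrow> real poly \<Rightarrow> real \<Rightarrow> bool" where
  "pder P P' t \<longleftrightarrow> (\<exists>K. \<forall>s. degree (P s) \<le> K) \<and>
     (\<forall>i. ((\<lambda>s. coeff (P s) i) has_real_derivative coeff P' i) (at t))"

lemma pder_const: "pder (\<lambda>s. p) 0 t"
  unfolding pder_def by auto

lemma pder_add: "pder P P' t \<Longrightarrow> pder Q Q' t \<Longrightarrow> pder (\<lambda>s. P s + Q s) (P' + Q') t"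
  unfolding pder_def
proof (elim conjE exE, intro conjI allI exI)
  fix K1 K2 s assume "\<forall>s. degree (P s) \<le> K1" "\<forall>s. degree (Q s) \<le> K2"
  then show "degree (P s + Q s) \<le> max K1 K2"
    by (meson degree_add_le max.cobounded1 max.cobounded2 order_trans)
next
  fix i assume "\<forall>i. ((\<lambda>s. coeff (P s) i) has_real_derivative coeff P' i) (at t)"
     "\<forall>i. ((\<lambda>s. coeff (Q s) i) has_real_derivative coeff Q' i) (at t)"
  then show "((\<lambda>s. coeff (P s + Q s) i) has_real_derivative coeff (P' + Q') i) (at t)"
    unfolding coeff_add by (intro DERIV_add) auto
qed

lemma pder_smult: assumes f: "(f has_real_derivative f') (at t)" and P: "pder P P' t"
  shows "pder (\<lambda>s. smult (f s) (P s)) (smult f' (P t) + smult (f t) P') t"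
  using P unfolding pder_def
proof (elim conjE exE, intro conjI allI exI)
  fix K s assume "\<forall>s. degree (P s) \<le> K"
  then show "degree (smult (f s) (P s)) \<le> K"
    by (meson degree_smult_le order_trans)
next
  fix i assume "\<forall>i. ((\<lambda>s. coeff (P s) i) has_real_derivative coeff P' i) (at t)"
  then show "((\<lambda>s. coeff (smult (f s) (P s)) i) has_real_derivative coeff (smult f' (P t) + smult (f t) P') i) (at t)"
    unfolding coeff_add coeff_smult
    using DERIV_mult[OF f, of "\<lambda>s. coeff (P s) i" "coeff P' i"] by (simp add: algebra_simps)
qed

lemma pder_neg: "pder P P' t \<Longrightarrow> pder (\<lambda>s. - P s) (- P') t"
  using pder_smult[of "\<lambda>_. -1" 0 t P P'] by simp

lemma pder_diff: "pder P P' t \<Longrightarrow> pder Q Q' t \<Longrightarrow> pder (\<lambda>s. P s - Q s) (P' - Q') t"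
  using pder_add[of P P' t "\<lambda>s. - Q s" "- Q'"] pder_neg[of Q Q' t] by simp

lemma pder_sum: "finite A \<Longrightarrow> (\<And>j. j \<in> A \<Longrightarrow> pder (P j) (P' j) t) \<Longrightarrow>
   pder (\<lambda>s. \<Sum>j\<in>A. P j s) (\<Sum>j\<in>A. P' j) t"
proof (induction A rule: finite_induct)
  case empty then show ?case using pder_const[of 0 t] by simp
next
  case (insert x F)
  then show ?case using pder_add[of "P x" "P' x" t "\<lambda>s. \<Sum>j\<in>F. P j s"] by simp
qed

lemma pder_mult: assumes P: "pder P P' t" and Q: "pder Q Q' t"
  shows "pder (\<lambda>s. P s * Q s) (P' * Q t + P t * Q') t"
proof -
  obtain K1 where K1: "\<And>s. degree (P s) \<le> K1" using P unfolding pder_def by auto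
  obtain K2 where K2: "\<And>s. degree (Q s) \<le> K2" using Q unfolding pder_def by auto
  have dP: "((\<lambda>s. coeff (P s) i) has_real_derivative coeff P' i) (at t)" for i
    using P unfolding pder_def by auto
  have dQ: "((\<lambda>s. coeff (Q s) i) has_real_derivative coeff Q' i) (at t)" for i
    using Q unfolding pder_def by auto
  have "degree (P s * Q s) \<le> K1 + K2" for s
    by (meson K1 K2 add_mono degree_mult_le order_trans)
  moreover have "((\<lambda>s. coeff (P s * Q s) i) has_real_derivative coeff (P' * Q t + P t * Q') i) (at t)" for i
  proof -
    have "((\<lambda>s. \<Sum>j\<le>i. coeff (P s) j * coeff (Q s) (i-j)) has_real_derivative
       (\<Sum>j\<le>i. coeff P' j * coeff (Q t) (i-j) + coeff (P t) j * coeff Q' (i-j))) (at t)"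
      by (rule DERIV_sum) (subst mult.commute[of "coeff (P t) _"], rule DERIV_mult[OF dP dQ])
    moreover have "coeff (P' * Q t + P t * Q') i = (\<Sum>j\<le>i. coeff P' j * coeff (Q t) (i-j) + coeff (P t) j * coeff Q' (i-j))"
      by (simp add: coeff_mult sum.distrib)
    ultimately show ?thesis by (simp add: coeff_mult)
  qed
  ultimately show ?thesis unfolding pder_def by blast
qed

lemma pder_degree: assumes "pder P P' t" "\<And>s. degree (P s) \<le> K" shows "degree P' \<le> K"
proof (rule degree_le, intro allI impI)
  fix i assume "K < i"
  have "(\<lambda>s. coeff (P s) i) = (\<lambda>s. 0)"
  proof
    fix s show "coeff (P s) i = 0" using assms(2)[of s] \<open>K < i\<close> by (intro coeff_eq_0) simp
  qed
  then have "((\<lambda>s. 0) has_real_derivative coeff P' i) (at t)"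
    using assms(1) unfolding pder_def by metis
  then show "coeff P' i = 0" using DERIV_const DERIV_unique by blast
qed

lemma Lf_deriv:
  assumes \<mu>d: "\<And>i. ((\<lambda>s. \<mu> s i) has_real_derivative (- c * t ^ i)) (at t)"
    and P: "pder P P' t"
  shows "((\<lambda>s. Lf (\<mu> s) (P s)) has_real_derivative (Lf (\<mu> t) P' - c * poly (P t) t)) (at t)"
proof -
  obtain K where K: "\<And>s. degree (P s) \<le> K" using P unfolding pder_def by auto
  have dP: "((\<lambda>s. coeff (P s) i) has_real_derivative coeff P' i) (at t)" for i
    using P unfolding pder_def by auto
  have e1: "Lf (\<mu> s) (P s) = (\<Sum>i\<le>K. coeff (P s) i * \<mu> s i)" for s by (rule Lf_bound[OF K])
  have e2: "Lf (\<mu> t) P' = (\<Sum>i\<le>K. coeff P' i * \<mu> t i)" by (rule Lf_bound[OF pder_degree[OF P K]])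
  have e3: "poly (P t) t = (\<Sum>i\<le>K. coeff (P t) i * t ^ i)"
    unfolding poly_altdef
    by (rule sum.mono_neutral_left) (use K in \<open>auto simp: coeff_eq_0\<close>)
  have "((\<lambda>s. \<Sum>i\<le>K. coeff (P s) i * \<mu> s i) has_real_derivative
        (\<Sum>i\<le>K. coeff P' i * \<mu> t i + coeff (P t) i * (- c * t ^ i))) (at t)"
    by (rule DERIV_sum) (auto intro!: derivative_eq_intros dP \<mu>d)
  moreover have "(\<Sum>i\<le>K. coeff P' i * \<mu> t i + coeff (P t) i * (- c * t ^ i)) = Lf (\<mu> t) P' - c * poly (P t) t"
    by (simp add: e2 e3 sum.distrib sum_distrib_left algebra_simps sum_negf sum_subtractf)
  ultimately show ?thesis by (simp add: e1)
qed

lemma GS_pder: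
  assumes \<mu>d: "\<And>i. ((\<lambda>s. \<mu> s i) has_real_derivative (- c * t ^ i)) (at t)"
    and pd: "PD (\<mu> t)"
  shows "\<exists>G'. pder (\<lambda>s. GS (\<mu> s) n) G' t"
proof (induction n rule: less_induct)
  case (less n)
  show ?case
  proof (cases n)
    case 0 then show ?thesis using pder_const by auto
  next
    case (Suc n')
    have "\<forall>j. \<exists>G'. j \<le> n' \<longrightarrow> pder (\<lambda>s. GS (\<mu> s) j) G' t" using less Suc by auto
    from choice[OF this] obtain D where D0: "\<forall>j. j \<le> n' \<longrightarrow> pder (\<lambda>s. GS (\<mu> s) j) (D j) t"
      by blast
    have D: "pder (\<lambda>s. GS (\<mu> s) j) (D j) t" if "j \<le> n'" for j using D0 that by blast
    have X: "pder (\<lambda>s. monom 1 (Suc n')) 0 t" by (rule pder_const)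
    have trm: "\<exists>T. pder (\<lambda>s. smult (Lf (\<mu> s) (monom 1 (Suc n') * GS (\<mu> s) j) / Lf (\<mu> s) (GS (\<mu> s) j * GS (\<mu> s) j)) (GS (\<mu> s) j)) T t"
      if j: "j \<le> n'" for j
    proof -
      note a = Lf_deriv[OF \<mu>d pder_mult[OF X D[OF j]]]
      note b = Lf_deriv[OF \<mu>d pder_mult[OF D[OF j] D[OF j]]]
      have nz: "Lf (\<mu> t) (GS (\<mu> t) j * GS (\<mu> t) j) \<noteq> 0"
        using pd GS_nz unfolding PD_def by (metis less_irrefl)
      show ?thesis by (rule exI, rule pder_smult[OF DERIV_divide[OF a b nz] D[OF j]])
    qed
    then have "\<forall>j. \<exists>T. j \<le> n' \<longrightarrow> pder (\<lambda>s. smult (Lf (\<mu> s) (monom 1 (Suc n') * GS (\<mu> s) j) / Lf (\<mu> s) (GS (\<mu> s) j * GS (\<mu> s) j)) (GS (\<mu> s) j)) T t"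
      by blast
    from choice[OF this] obtain T where T0: "\<forall>j. j \<le> n' \<longrightarrow> pder (\<lambda>s. smult (Lf (\<mu> s) (monom 1 (Suc n') * GS (\<mu> s) j) / Lf (\<mu> s) (GS (\<mu> s) j * GS (\<mu> s) j)) (GS (\<mu> s) j)) (T j) t"
      by blast
    have T: "pder (\<lambda>s. smult (Lf (\<mu> s) (monom 1 (Suc n') * GS (\<mu> s) j) / Lf (\<mu> s) (GS (\<mu> s) j * GS (\<mu> s) j)) (GS (\<mu> s) j)) (T j) t"
      if "j \<le> n'" for j using T0 that by blast
    have "pder (\<lambda>s. monom 1 (Suc n') - (\<Sum>j\<le>n'. smult (Lf (\<mu> s) (monom 1 (Suc n') * GS (\<mu> s) j) / Lf (\<mu> s) (GS (\<mu> s) j * GS (\<mu> s) j)) (GS (\<mu> s) j))) (0 - (\<Sum>j\<le>n'. T j)) t"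
      by (rule pder_diff[OF X pder_sum]) (simp, rule T, simp)
    then show ?thesis unfolding Suc GS.simps by blast
  qed
qed



lemma pder_GS_low:
  assumes "pder (\<lambda>s. GS (\<mu> s) n) G' t"
  shows "degree G' < n \<or> G' = 0"
proof -
  have c0: "coeff G' i = 0" if "i \<ge> n" for i
  proof -
    have "(\<lambda>s. coeff (GS (\<mu> s) n) i) = (\<lambda>s. if i = n then 1 else 0)"
      using that by (auto simp: GS_lead coeff_eq_0 GS_degree)
    then have "((\<lambda>s. if i = n then 1 else 0) has_real_derivative coeff G' i) (at t)"
      using assms unfolding pder_def by metis
    moreover have "((\<lambda>s. if i = n then 1 else 0) has_real_derivative 0) (at t)"
      by (rule DERIV_const)
    ultimately show ?thesis using DERIV_unique by blast
  qed
  show ?thesis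
  proof (cases "G' = 0")
    case False
    then have "coeff G' (degree G') \<noteq> 0" by simp
    then show ?thesis using c0 by (meson not_le)
  qed simp
qed

lemma low_poly: assumes "\<And>i. i \<ge> n \<Longrightarrow> coeff r i = 0" shows "degree r < n \<or> r = 0"
proof (cases "r = 0")
  case False
  then have "coeff r (degree r) \<noteq> 0" by simp
  then show ?thesis using assms by (meson not_le)
qed simp

locale msetup =
  fixes \<mu> :: "real \<Rightarrow> nat \<Rightarrow> real" and c t :: real and S :: "real set"
  assumes \<mu>d: "\<And>i. ((\<lambda>s. \<mu> s i) has_real_derivative (- c * t ^ i)) (at t)"
    and S: "open S" "t \<in> S" and pdS: "\<And>s. s \<in> S \<Longrightarrow> PD (\<mu> s)"
begin

lemma pdt: "PD (\<mu> t)" using pdS S by simp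

lemma Hpos: "Lf (\<mu> t) (GS (\<mu> t) n * GS (\<mu> t) n) > 0"
  using pdt GS_nz unfolding PD_def by blast

lemma H_deriv:
  "((\<lambda>s. Lf (\<mu> s) (GS (\<mu> s) n * GS (\<mu> s) n)) has_real_derivative
     (- c * (poly (GS (\<mu> t) n) t)\<^sup>2)) (at t)"
proof -
  obtain G' where G': "pder (\<lambda>s. GS (\<mu> s) n) G' t" using GS_pder[OF \<mu>d pdt] by blast
  note D = Lf_deriv[OF \<mu>d pder_mult[OF G' G']]
  have "Lf (\<mu> t) (GS (\<mu> t) n * G') = 0"
    by (rule GS_orth_low[OF pdt pder_GS_low[OF G']])
  then have "Lf (\<mu> t) (G' * GS (\<mu> t) n + GS (\<mu> t) n * G') = 0"
    by (simp only: Lf_add mult.commute[of G'] add_0)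
  then show ?thesis using D by (simp add: power2_eq_square)
qed

lemma p_deriv:
  assumes n: "n \<ge> 1"
  shows "((\<lambda>s. coeff (GS (\<mu> s) n) (n - 1)) has_real_derivative
     (c * poly (GS (\<mu> t) n) t * poly (GS (\<mu> t) (n - 1)) t / Lf (\<mu> t) (GS (\<mu> t) (n - 1) * GS (\<mu> t) (n - 1)))) (at t)"
proof -
  obtain G' where G': "pder (\<lambda>s. GS (\<mu> s) n) G' t" using GS_pder[OF \<mu>d pdt] by blast
  obtain F' where F': "pder (\<lambda>s. GS (\<mu> s) (n - 1)) F' t" using GS_pder[OF \<mu>d pdt] by blast
  define d where "d = coeff G' (n - 1)"
  have dd: "((\<lambda>s. coeff (GS (\<mu> s) n) (n - 1)) has_real_derivative d) (at t)"
    using G' unfolding pder_def d_def by blast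
  note D = Lf_deriv[OF \<mu>d pder_mult[OF G' F']]
  have "((\<lambda>s. Lf (\<mu> s) (GS (\<mu> s) n * GS (\<mu> s) (n - 1))) has_real_derivative 0) (at t)"
    by (rule has_field_derivative_transform_within_open[OF DERIV_const S])
       (use GS_orth pdS n in auto)
  then have eq0: "Lf (\<mu> t) (G' * GS (\<mu> t) (n - 1) + GS (\<mu> t) n * F') -
      c * poly (GS (\<mu> t) n * GS (\<mu> t) (n - 1)) t = 0"
    using D DERIV_unique by blast
  have "Lf (\<mu> t) (GS (\<mu> t) n * F') = 0"
    using GS_orth_low[OF pdt, of F' n] pder_GS_low[OF F'] n by force
  define r where "r = G' - smult d (GS (\<mu> t) (n - 1))"
  have "coeff r i = 0" if "i \<ge> n - 1" for i
  proof (cases "i = n - 1")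
    case True then show ?thesis by (simp add: r_def d_def GS_lead)
  next
    case False
    then have "i \<ge> n" "i > n - 1" using that n by auto
    moreover have "coeff G' i = 0" using pder_GS_low[OF G'] \<open>i \<ge> n\<close>
      by (metis coeff_0 coeff_eq_0 order_less_le_trans)
    ultimately show ?thesis by (simp add: r_def coeff_eq_0 GS_degree)
  qed
  then have "Lf (\<mu> t) (GS (\<mu> t) (n - 1) * r) = 0"
    by (intro GS_orth_low[OF pdt] low_poly)
  then have "Lf (\<mu> t) (G' * GS (\<mu> t) (n - 1)) = d * Lf (\<mu> t) (GS (\<mu> t) (n - 1) * GS (\<mu> t) (n - 1))"
    unfolding r_def by (simp add: algebra_simps Lf_diff Lf_smult)
  with eq0 \<open>Lf (\<mu> t) (GS (\<mu> t) n * F') = 0\<close>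
  have "d * Lf (\<mu> t) (GS (\<mu> t) (n - 1) * GS (\<mu> t) (n - 1)) = c * poly (GS (\<mu> t) n) t * poly (GS (\<mu> t) (n - 1)) t"
    by (simp add: Lf_add)
  then have "d = c * poly (GS (\<mu> t) n) t * poly (GS (\<mu> t) (n - 1)) t / Lf (\<mu> t) (GS (\<mu> t) (n - 1) * GS (\<mu> t) (n - 1))"
    using Hpos[of "n - 1"] by (simp add: field_simps)
  then show ?thesis using dd by simp
qed

end


lemma theta_ind: "theta (x - u) = indicator {u<..} x"
  by (simp add: theta_def indicator_def)

lemma open_ivl: "open (ivl a b)"
  unfolding ivl_def by (intro open_Collect_conj open_Collect_less continuous_intros)

lemma sets_ivl: "ivl a b \<in> sets borel"
  unfolding ivl_def by measurable

lemma si_ind: fixes f :: "real \<Rightarrow> real" shows "set_integrable lborel A f \<Longrightarrow> set_integrable lborel A (\<lambda>x. indicator {u<..} x * f x)"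
proof -
  assume "set_integrable lborel A f"
  then have "integrable lborel (\<lambda>x. (indicator A x *\<^sub>R f x) * indicator {u<..} x)"
    unfolding set_integrable_def by (intro integrable_real_mult_indicator) auto
  then show ?thesis unfolding set_integrable_def by (simp add: algebra_simps)
qed

lemma si_sum: fixes f :: "_ \<Rightarrow> _ \<Rightarrow> real" shows "finite S \<Longrightarrow> (\<And>j. j \<in> S \<Longrightarrow> set_integrable M A (f j)) \<Longrightarrow>
    set_integrable M A (\<lambda>x. \<Sum>j\<in>S. f j x)"
proof (induction S rule: finite_induct)
  case empty then show ?case by (simp add: set_integrable_def)
next
  case (insert y F)
  have "set_integrable M A (\<lambda>x. f y x + (\<Sum>j\<in>F. f j x))"
    by (rule set_integral_add(1)) (use insert in auto)
  then show ?case using insert by simp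
qed

lemma si_lin: fixes f :: "_ \<Rightarrow> _ \<Rightarrow> real" shows "finite S \<Longrightarrow> (\<And>j. j \<in> S \<Longrightarrow> set_integrable M A (f j)) \<Longrightarrow>
    (LINT x:A|M. (\<Sum>j\<in>S. f j x)) = (\<Sum>j\<in>S. LINT x:A|M. f j x)"
proof (induction S rule: finite_induct)
  case empty then show ?case by (simp add: set_lebesgue_integral_def)
next
  case (insert y F)
  then show ?case by (simp, subst set_integral_add(2)) (auto intro: si_sum)
qed

lemma si_theta: fixes f :: "real \<Rightarrow> real"
  shows "set_integrable lborel A f \<Longrightarrow> set_integrable lborel A (\<lambda>x. theta (x - u) * f x)"
  unfolding theta_ind by (rule si_ind)

lemma wt_expand: "x ^ i * wt w0 \<omega> m u x =
   \<omega> 0 * (x ^ i * w0 x) + (\<Sum>j=1..m. \<omega> j * (theta (x - u j) * (x ^ i * w0 x)))"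
  by (simp add: wt_def sum_distrib_left sum_distrib_right algebra_simps)

lemma wt_int: assumes "set_integrable lborel I (\<lambda>x. x ^ i * w0 x)"
  shows "set_integrable lborel I (\<lambda>x. x ^ i * wt w0 \<omega> m u x)"
  unfolding wt_expand
  by (intro set_integral_add(1) set_integrable_mult_right si_sum si_theta assms) auto

lemma ip_poly: assumes "\<And>i. set_integrable lborel (ivl a b) (\<lambda>x. x ^ i * W x)"
  shows "ip a b W (\<lambda>x. poly p x) = Lf (\<lambda>i. ip a b W (\<lambda>x. x ^ i)) p"
proof -
  have "ip a b W (\<lambda>x. poly p x) = (LINT x:ivl a b|lborel. (\<Sum>i\<le>degree p. coeff p i * (x ^ i * W x)))"
    unfolding ip_def poly_altdef by (simp add: sum_distrib_right sum_distrib_left algebra_simps)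
  also have "\<dots> = (\<Sum>i\<le>degree p. LINT x:ivl a b|lborel. coeff p i * (x ^ i * W x))"
    by (rule si_lin) (auto intro: set_integrable_mult_right assms)
  also have "\<dots> = Lf (\<lambda>i. ip a b W (\<lambda>x. x ^ i)) p"
    unfolding Lf_def ip_def by (simp add: set_integral_mult_right)
  finally show ?thesis .
qed

lemma ip_Lf1: assumes "\<And>i. set_integrable lborel (ivl a b) (\<lambda>x. x ^ i * W x)"
  shows "ip a b W (\<lambda>x. poly P x * x ^ j) = Lf (\<lambda>i. ip a b W (\<lambda>x. x ^ i)) (P * monom 1 j)"
  using ip_poly[OF assms, of "P * monom 1 j"] by (simp add: poly_monom)

lemma ip_Lf2: assumes "\<And>i. set_integrable lborel (ivl a b) (\<lambda>x. x ^ i * W x)"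
  shows "ip a b W (\<lambda>x. (poly P x)\<^sup>2) = Lf (\<lambda>i. ip a b W (\<lambda>x. x ^ i)) (P * P)"
  using ip_poly[OF assms, of "P * P"] by (simp add: power2_eq_square)

lemma OP_eq: assumes "\<And>i. set_integrable lborel (ivl a b) (\<lambda>x. x ^ i * W x)"
  and "PD (\<lambda>i. ip a b W (\<lambda>x. x ^ i))"
  shows "OP a b W n = GS (\<lambda>i. ip a b W (\<lambda>x. x ^ i)) n"
  unfolding OP_def ip_Lf1[OF assms(1)] by (rule OP_GS[OF assms(2)])



lemma mom_deriv:
  fixes g :: "real \<Rightarrow> real"
  assumes I: "open I" "I \<in> sets borel" "u \<in> I" and gc: "continuous_on I g"
    and gi: "set_integrable lborel I g"
  shows "((\<lambda>s. LINT x:I|lborel. theta (x - s) * g x) has_real_derivative (- g u)) (at u)"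
proof -
  obtain e where e: "e > 0" "cball u e \<subseteq> I" using I open_contains_cball by blast
  define c0 where "c0 = u - e"
  define d where "d = u + e"
  have sub: "{c0..d} \<subseteq> I"
  proof
    fix x assume "x \<in> {c0..d}"
    then have "x \<in> cball u e" by (auto simp: c0_def d_def dist_real_def)
    then show "x \<in> I" using e by blast
  qed
  have gcI: "continuous_on {c0..d} g" by (rule continuous_on_subset[OF gc sub])
  have "((\<lambda>s. LBINT x=c0..s. g x) has_vector_derivative g u) (at u within {c0..d})"
    by (rule interval_integral_FTC2) (use e gcI in \<open>auto simp: c0_def d_def\<close>)
  then have FTC: "((\<lambda>s. LBINT x=c0..s. g x) has_real_derivative g u) (at u)"
    using at_within_Icc_at[of c0 u d] e
    by (simp add: has_real_derivative_iff_has_vector_derivative c0_def d_def)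
  define F where "F s = (LINT x:I|lborel. theta (x - s) * g x)" for s
  have eq: "F c0 - (LBINT x=c0..s. g x) = F s" if s: "s \<in> {c0<..<d}" for s
  proof -
    have i1: "(LBINT x=c0..s. g x) = (LINT x:{c0<..s}|lborel. g x)"
      by (rule interval_integral_Ioc) (use s in auto)
    have subs: "{c0<..s} \<subseteq> I" using sub s by auto
    have int1: "set_integrable lborel {c0<..s} g"
      by (rule set_integrable_subset[OF gi _ subs]) auto
    have int2: "set_integrable lborel I (\<lambda>x. theta (x - s) * g x)" by (rule si_theta[OF gi])
    have pt: "indicator I x *\<^sub>R (theta (x - c0) * g x) =
        indicator {c0<..s} x *\<^sub>R g x + indicator I x *\<^sub>R (theta (x - s) * g x)" for x
      using subs s by (auto simp: theta_def indicator_def subset_eq)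
    have "F c0 = integral\<^sup>L lborel (\<lambda>x. indicator {c0<..s} x *\<^sub>R g x + indicator I x *\<^sub>R (theta (x - s) * g x))"
      unfolding F_def set_lebesgue_integral_def pt ..
    also have "\<dots> = (LINT x:{c0<..s}|lborel. g x) + F s"
      unfolding F_def set_lebesgue_integral_def
      by (rule Bochner_Integration.integral_add) (use int1 int2 in \<open>auto simp: set_integrable_def\<close>)
    finally show ?thesis using i1 by simp
  qed
  have "((\<lambda>s. F c0 - (LBINT x=c0..s. g x)) has_real_derivative (- g u)) (at u)"
    using FTC by (auto intro!: derivative_eq_intros)
  then have "(F has_real_derivative (- g u)) (at u)"
    by (rule has_field_derivative_transform_within_open[where S = "{c0<..<d}"])
       (use e eq in \<open>auto simp: c0_def d_def\<close>)
  then show ?thesis unfolding F_def .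
qed

lemma si_poly: fixes W :: "real \<Rightarrow> real" assumes "\<And>i. set_integrable lborel A (\<lambda>x. x ^ i * W x)"
  shows "set_integrable lborel A (\<lambda>x. poly q x * W x)"
proof -
  have "set_integrable lborel A (\<lambda>x. \<Sum>i\<le>degree q. coeff q i * (x ^ i * W x))"
    by (rule si_sum) (auto intro: set_integrable_mult_right assms)
  then show ?thesis unfolding poly_altdef by (simp add: sum_distrib_right sum_distrib_left algebra_simps)
qed

lemma PD_from_pos:
  assumes mi: "\<And>i. set_integrable lborel (ivl a b) (\<lambda>x. x ^ i * W x)"
    and nn: "\<And>x. x \<in> ivl a b \<Longrightarrow> W x \<ge> 0"
    and uv: "u < v" "{u<..<v} \<subseteq> ivl a b" and pos: "\<And>x. x \<in> {u<..<v} \<Longrightarrow> W x > 0"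
  shows "PD (\<lambda>i. ip a b W (\<lambda>x. x ^ i))"
  unfolding PD_def
proof (intro allI impI)
  fix p :: "real poly" assume p: "p \<noteq> 0"
  define f where "f x = indicator (ivl a b) x * ((poly p x)\<^sup>2 * W x)" for x
  have "Lf (\<lambda>i. ip a b W (\<lambda>x. x ^ i)) (p * p) = ip a b W (\<lambda>x. (poly p x)\<^sup>2)"
    by (rule ip_Lf2[OF mi, symmetric])
  also have "\<dots> = integral\<^sup>L lborel f"
    unfolding ip_def set_lebesgue_integral_def f_def by simp
  finally have L: "Lf (\<lambda>i. ip a b W (\<lambda>x. x ^ i)) (p * p) = integral\<^sup>L lborel f" .
  have fint: "integrable lborel f"
    using si_poly[OF mi, of "p * p"] unfolding set_integrable_def f_def
    by (simp add: power2_eq_square)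
  have fnn: "f x \<ge> 0" for x using nn by (auto simp: f_def indicator_def)
  have "integral\<^sup>L lborel f \<ge> 0" by (rule integral_nonneg_AE) (use fnn in auto)
  moreover have "integral\<^sup>L lborel f \<noteq> 0"
  proof
    assume "integral\<^sup>L lborel f = 0"
    then have ae: "AE x in lborel. f x = 0"
      using integral_nonneg_eq_0_iff_AE[OF fint] fnn by auto
    have fin: "finite {x. poly p x = 0}" by (rule poly_roots_finite[OF p])
    have "{x. poly p x = 0} \<in> null_sets lborel"
      using fin by (simp add: finite_imp_null_set_lborel)
    then have ae2: "AE x in lborel. x \<notin> {x. poly p x = 0}" by (rule AE_not_in)
    have "AE x in lborel. x \<notin> {u<..<v}"
      using ae ae2
    proof eventually_elim
      case (elim x)
      show ?case
      proof
        assume x: "x \<in> {u<..<v}"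
        then have "x \<in> ivl a b" "W x > 0" using uv pos by auto
        moreover have "poly p x \<noteq> 0" using elim by auto
        ultimately have "f x > 0" by (simp add: f_def)
        then show False using elim by simp
      qed
    qed
    then have "emeasure lborel {u<..<v} = 0"
      by (subst (asm) AE_iff_measurable[of "{u<..<v}"]) auto
    moreover have "emeasure lborel {u<..<v} = ennreal (v - u)"
      using uv by (simp add: emeasure_lborel_Ioo)
    ultimately show False using uv by simp
  qed
  ultimately show "Lf (\<lambda>i. ip a b W (\<lambda>x. x ^ i)) (p * p) > 0" using L by simp
qed



lemma step_nonneg:
  fixes m :: nat and \<omega> :: "nat \<Rightarrow> real" and u :: "nat \<Rightarrow> real"
  assumes "\<forall>l\<le>m. (\<Sum>k=0..l. \<omega> k) \<ge> (0::real)"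
    and "\<forall>k\<in>{1..m}. \<forall>l\<in>{1..m}. k < l \<longrightarrow> u k < u l"
  shows "\<omega> 0 + (\<Sum>k=1..m. \<omega> k * theta (x - u k)) \<ge> 0"
  using assms
proof (induction m)
  case 0 then show ?case by auto
next
  case (Suc m)
  show ?case
  proof (cases "x > u (Suc m)")
    case True
    have "theta (x - u j) = 1" if "j \<in> {1..Suc m}" for j
    proof (cases "j = Suc m")
      case False
      then have "u j < u (Suc m)" using Suc.prems(2) that by auto
      then show ?thesis using True by (simp add: theta_def)
    qed (use True in \<open>simp add: theta_def\<close>)
    then have "(\<Sum>k=1..Suc m. \<omega> k * theta (x - u k)) = (\<Sum>k=1..Suc m. \<omega> k)"
      by (intro sum.cong) auto
    moreover have "(\<Sum>k=0..Suc m. \<omega> k) = \<omega> 0 + (\<Sum>k=1..Suc m. \<omega> k)"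
      by (subst sum.atLeast_Suc_atMost) auto
    ultimately show ?thesis using Suc.prems(1) by fastforce
  next
    case False
    then have "theta (x - u (Suc m)) = 0" by (simp add: theta_def)
    then have "(\<Sum>k=1..Suc m. \<omega> k * theta (x - u k)) = (\<Sum>k=1..m. \<omega> k * theta (x - u k))"
      by simp
    moreover have "\<omega> 0 + (\<Sum>k=1..m. \<omega> k * theta (x - u k)) \<ge> 0"
      by (rule Suc.IH) (use Suc.prems in auto)
    ultimately show ?thesis by linarith
  qed
qed

lemma wt_upd:
  assumes k: "k \<in> {1..m}"
  shows "wt w0 \<omega> m (t(k := s)) x = wt w0 \<omega> m t x + \<omega> k * w0 x * (theta (x - s) - theta (x - t k))"
proof -
  have fin: "finite {1..m}" by simp
  have "(\<Sum>j=1..m. \<omega> j * theta (x - (t(k := s)) j)) = \<omega> k * theta (x - (t(k := s)) k) + (\<Sum>j\<in>{1..m} - {k}. \<omega> j * theta (x - (t(k := s)) j))"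
    by (rule sum.remove[OF fin k])
  also have "\<omega> k * theta (x - (t(k := s)) k) = \<omega> k * theta (x - s)" by simp
  also have "(\<Sum>j\<in>{1..m} - {k}. \<omega> j * theta (x - (t(k := s)) j)) = (\<Sum>j\<in>{1..m} - {k}. \<omega> j * theta (x - t j))"
    by (intro sum.cong) auto
  also have "(\<Sum>j\<in>{1..m} - {k}. \<omega> j * theta (x - t j)) = (\<Sum>j=1..m. \<omega> j * theta (x - t j)) - \<omega> k * theta (x - t k)"
    using sum.remove[OF fin k, of "\<lambda>j. \<omega> j * theta (x - t j)"] by simp
  finally have eq: "(\<Sum>j=1..m. \<omega> j * theta (x - (t(k := s)) j)) = \<omega> k * theta (x - s) + ((\<Sum>j=1..m. \<omega> j * theta (x - t j)) - \<omega> k * theta (x - t k))" .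
  show ?thesis unfolding wt_def eq by (simp add: algebra_simps)
qed

lemma w0_cont:
  assumes "\<forall>j. \<forall>x\<in>I. (deriv ^^ j) w0 differentiable (at x)" "open I"
  shows "continuous_on I w0"
proof -
  have "isCont w0 x" if "x \<in> I" for x
  proof -
    have "w0 differentiable (at x)" using spec[OF assms(1), of 0] that by simp
    then show ?thesis by (rule differentiable_imp_continuous_within)
  qed
  then have "\<forall>x\<in>I. isCont w0 x" by blast
  then show ?thesis by (rule continuous_at_imp_continuous_on)
qed



lemma main_k:
  fixes a b :: ereal and w0 :: "real \<Rightarrow> real" and m :: nat
    and t :: "nat \<Rightarrow> real" and \<omega> :: "nat \<Rightarrow> real"
  assumes w0_pos: "\<forall>x\<in>ivl a b. w0 x > 0"
    and w0_smooth: "\<forall>j. \<forall>x\<in>ivl a b. (deriv ^^ j) w0 differentiable (at x)"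
    and moments: "\<forall>j::nat. set_integrable lborel (ivl a b) (\<lambda>x. x ^ j * w0 x)"
    and t_in: "\<forall>k\<in>{1..m}. t k \<in> ivl a b"
    and t_mono: "\<forall>k\<in>{1..m}. \<forall>l\<in>{1..m}. k < l \<longrightarrow> t k < t l"
    and \<omega>_sums: "\<forall>l\<le>m. (\<Sum>k=0..l. \<omega> k) \<ge> 0"
    and nonzero: "\<exists>x\<in>ivl a b. wt w0 \<omega> m t x \<noteq> 0"
    and k: "k \<in> {1..m}"
  shows "\<exists>S \<mu> c. msetup \<mu> c (t k) S \<and> c = \<omega> k * w0 (t k) \<and>
     (\<forall>s i. \<mu> s i = ip a b (wt w0 \<omega> m (t(k := s))) (\<lambda>x. x ^ i)) \<and>
     (\<forall>s i. set_integrable lborel (ivl a b) (\<lambda>x. x ^ i * wt w0 \<omega> m (t(k := s)) x))"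
proof -
  define I where "I = ivl a b"
  have Iopen: "open I" unfolding I_def by (rule open_ivl)
  have Isets: "I \<in> sets borel" unfolding I_def by (rule sets_ivl)
  have w0c: "continuous_on I w0" using w0_cont[OF _ Iopen] w0_smooth unfolding I_def by blast
  define T where "T s = t(k := s)" for s
  define W where "W s = wt w0 \<omega> m (T s)" for s
  define \<mu> where "\<mu> s i = ip a b (W s) (\<lambda>x. x ^ i)" for s i
  define c where "c = \<omega> k * w0 (t k)"
  have Tt: "T (t k) = t" by (simp add: T_def)
  have mi: "set_integrable lborel (ivl a b) (\<lambda>x. x ^ i * W s x)" for s i
    unfolding W_def by (rule wt_int) (use moments in auto)
  have tkI: "t k \<in> I" using t_in k unfolding I_def by blast
  have \<mu>d: "((\<lambda>s. \<mu> s i) has_real_derivative (- c * t k ^ i)) (at (t k))" for i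
  proof -
    define g where "g x = x ^ i * w0 x" for x
    define F where "F s = (LINT x:I|lborel. theta (x - s) * g x)" for s
    have gc: "continuous_on I g" unfolding g_def by (intro continuous_intros w0c)
    have gi: "set_integrable lborel I g" unfolding g_def I_def using moments by blast
    have dF: "(F has_real_derivative - g (t k)) (at (t k))"
      unfolding F_def by (rule mom_deriv[OF Iopen Isets tkI gc gi])
    have eq\<mu>: "\<mu> s i = \<mu> (t k) i + \<omega> k * F s - \<omega> k * F (t k)" for s
    proof -
      have pw: "x ^ i * W s x = (x ^ i * W (t k) x + \<omega> k * (theta (x - s) * g x)) - \<omega> k * (theta (x - t k) * g x)" for x
        unfolding W_def T_def g_def wt_upd[OF k] by (simp add: algebra_simps)
      have i1: "set_integrable lborel I (\<lambda>x. x ^ i * W (t k) x)" using mi unfolding I_def by blast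
      have i2: "set_integrable lborel I (\<lambda>x. \<omega> k * (theta (x - s) * g x))"
        by (intro set_integrable_mult_right si_theta gi)
      have i3: "set_integrable lborel I (\<lambda>x. \<omega> k * (theta (x - t k) * g x))"
        by (intro set_integrable_mult_right si_theta gi)
      have "\<mu> s i = (LINT x:I|lborel. (x ^ i * W (t k) x + \<omega> k * (theta (x - s) * g x)) - \<omega> k * (theta (x - t k) * g x))"
        unfolding \<mu>_def ip_def I_def pw ..
      also have "\<dots> = (LINT x:I|lborel. x ^ i * W (t k) x + \<omega> k * (theta (x - s) * g x)) - (LINT x:I|lborel. \<omega> k * (theta (x - t k) * g x))"
        by (rule set_integral_diff(2)) (intro set_integral_add(1) i1 i2, rule i3)
      also have "(LINT x:I|lborel. x ^ i * W (t k) x + \<omega> k * (theta (x - s) * g x)) = (LINT x:I|lborel. x ^ i * W (t k) x) + (LINT x:I|lborel. \<omega> k * (theta (x - s) * g x))"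
        by (rule set_integral_add(2)[OF i1 i2])
      finally show ?thesis unfolding \<mu>_def ip_def F_def I_def by (simp add: set_integral_mult_right)
    qed
    have D: "((\<lambda>s. \<mu> (t k) i + \<omega> k * F s - \<omega> k * F (t k)) has_real_derivative (\<omega> k * (- g (t k)))) (at (t k))"
      by (rule derivative_eq_intros DERIV_const DERIV_cmult dF refl)+ simp
    have eqfun: "(\<lambda>s. \<mu> s i) = (\<lambda>s. \<mu> (t k) i + \<omega> k * F s - \<omega> k * F (t k))"
      by (rule ext) (rule eq\<mu>)
    have val: "\<omega> k * (- g (t k)) = - c * t k ^ i" by (simp add: c_def g_def)
    show ?thesis by (subst eqfun) (rule D[unfolded val])
  qed
  define E1 where "E1 = Min (insert 1 ((\<lambda>j. \<bar>t j - t k\<bar>) ` ({1..m} - {k})))"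
  have tne: "t j \<noteq> t k" if "j \<in> {1..m}" "j \<noteq> k" for j
    using t_mono that k by (metis less_irrefl linorder_neqE_nat)
  have E1pos: "E1 > 0" unfolding E1_def using tne by (subst Min_gr_iff) auto
  have E1le: "E1 \<le> \<bar>t j - t k\<bar>" if "j \<in> {1..m}" "j \<noteq> k" for j
    unfolding E1_def by (rule Min_le) (use that in auto)
  have mono_s: "\<forall>k1\<in>{1..m}. \<forall>l1\<in>{1..m}. k1 < l1 \<longrightarrow> T s k1 < T s l1" if s: "\<bar>s - t k\<bar> < E1" for s
  proof (intro ballI impI)
    fix k1 l1 assume kl: "k1 \<in> {1..m}" "l1 \<in> {1..m}" "k1 < l1"
    show "T s k1 < T s l1"
    proof (cases "k1 = k")
      case True
      then have "l1 \<noteq> k" using kl by auto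
      then have "t k < t l1" "E1 \<le> \<bar>t l1 - t k\<bar>" using t_mono kl True E1le[of l1] by auto
      then show ?thesis using True \<open>l1 \<noteq> k\<close> s by (simp add: T_def)
    next
      case False
      show ?thesis
      proof (cases "l1 = k")
        case True
        then have "t k1 < t k" "E1 \<le> \<bar>t k1 - t k\<bar>" using t_mono kl False E1le[of k1] by auto
        then show ?thesis using True False s by (simp add: T_def)
      next
        case False
        then show ?thesis using \<open>k1 \<noteq> k\<close> t_mono kl by (simp add: T_def)
      qed
    qed
  qed
  have nonnegW: "W s x \<ge> 0" if s: "\<bar>s - t k\<bar> < E1" and x: "x \<in> I" for s x
  proof -
    have "\<omega> 0 + (\<Sum>j=1..m. \<omega> j * theta (x - T s j)) \<ge> 0"
      by (rule step_nonneg[OF \<omega>_sums mono_s[OF s]])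
    moreover have "w0 x > 0" using w0_pos x unfolding I_def by blast
    ultimately show ?thesis unfolding W_def wt_def by simp
  qed
  obtain x0 where x0: "x0 \<in> I" "wt w0 \<omega> m t x0 \<noteq> 0" using nonzero unfolding I_def by blast
  define q where "q = \<omega> 0 + (\<Sum>j=1..m. \<omega> j * theta (x0 - t j))"
  have w0x0: "w0 x0 > 0" using w0_pos x0 unfolding I_def by blast
  have "W (t k) x0 \<ge> 0" by (rule nonnegW) (use E1pos x0 in auto)
  moreover have "W (t k) x0 \<noteq> 0" using x0(2) by (simp add: W_def Tt)
  ultimately have "W (t k) x0 > 0" by linarith
  moreover have "W (t k) x0 = w0 x0 * q" unfolding W_def Tt wt_def q_def ..
  ultimately have "w0 x0 * q > 0" by simp
  then have qpos: "q > 0" using w0x0 by (simp add: zero_less_mult_iff)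
  obtain e2 where e2: "e2 > 0" "ball x0 e2 \<subseteq> I" using Iopen x0 open_contains_ball by blast
  define D1 where "D1 = Min (insert e2 ((\<lambda>j. x0 - t j) ` {j\<in>{1..m}. t j < x0}))"
  have D1pos: "D1 > 0" unfolding D1_def using e2 by (subst Min_gr_iff) auto
  have D1e2: "D1 \<le> e2" unfolding D1_def by (rule Min_le) auto
  have D1le: "D1 \<le> x0 - t j" if "j \<in> {1..m}" "t j < x0" for j
    unfolding D1_def by (rule Min_le) (use that in auto)
  define u where "u = x0 - D1 / 2"
  define v where "v = x0 - D1 / 4"
  have uv: "u < v" using D1pos by (simp add: u_def v_def)
  have uvI: "{u<..<v} \<subseteq> I"
  proof
    fix x assume "x \<in> {u<..<v}"
    then have "dist x0 x < e2" using D1pos D1e2 by (auto simp: u_def v_def dist_real_def)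
    then show "x \<in> I" using e2 by auto
  qed
  have posW: "W s x > 0" if s: "\<bar>s - t k\<bar> < D1 / 4" and x: "x \<in> {u<..<v}" for s x
  proof -
    have sl: "t k - D1 / 4 < s" "s < t k + D1 / 4" using s unfolding abs_less_iff by linarith+
    have xu: "x0 - D1 / 2 < x" "x < x0 - D1 / 4" using x by (auto simp: u_def v_def)
    have th: "theta (x - T s j) = theta (x0 - t j)" if j: "j \<in> {1..m}" for j
    proof (cases "j = k")
      case True
      show ?thesis
      proof (cases "t k < x0")
        case True
        then have "D1 \<le> x0 - t k" using D1le k by blast
        then have "x - s > 0" using sl xu by linarith
        then show ?thesis using True \<open>j = k\<close> by (simp add: T_def theta_def)
      next
        case False
        then have "\<not> x - s > 0" using sl xu D1pos by linarith
        then show ?thesis using False \<open>j = k\<close> by (simp add: T_def theta_def)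
      qed
    next
      case False
      show ?thesis
      proof (cases "t j < x0")
        case True
        then have "D1 \<le> x0 - t j" using D1le j by blast
        then have "x - t j > 0" using xu by linarith
        then show ?thesis using True \<open>j \<noteq> k\<close> by (simp add: T_def theta_def)
      next
        case False
        then have "\<not> x - t j > 0" using xu D1pos by linarith
        then show ?thesis using False \<open>j \<noteq> k\<close> by (simp add: T_def theta_def)
      qed
    qed
    have "(\<Sum>j=1..m. \<omega> j * theta (x - T s j)) = (\<Sum>j=1..m. \<omega> j * theta (x0 - t j))"
      by (rule sum.cong) (use th in auto)
    then have "W s x = w0 x * q" unfolding W_def wt_def q_def by simp
    moreover have "w0 x > 0" using w0_pos x uvI unfolding I_def by blast
    ultimately show ?thesis using qpos by simp
  qed
  define S where "S = ball (t k) (min E1 (D1 / 4))"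
  have pdS: "PD (\<mu> s)" if "s \<in> S" for s
  proof -
    have s1: "\<bar>s - t k\<bar> < E1" "\<bar>s - t k\<bar> < D1 / 4" using that by (auto simp: S_def dist_real_def abs_minus_commute)
    have "PD (\<lambda>i. ip a b (W s) (\<lambda>x. x ^ i))"
      by (rule PD_from_pos[OF mi _ uv _ posW[OF s1(2)]]) (use nonnegW[OF s1(1)] uvI in \<open>auto simp: I_def\<close>)
    then show ?thesis unfolding \<mu>_def by (simp add: fun_eq_iff)
  qed
  have ms: "msetup \<mu> c (t k) S"
    by unfold_locales (use \<mu>d pdS E1pos D1pos in \<open>auto simp: S_def\<close>)
  show ?thesis
    by (rule exI[of _ S], rule exI[of _ \<mu>], rule exI[of _ c])
       (use ms mi in \<open>auto simp: c_def \<mu>_def W_def T_def\<close>)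
qed



theorem lemma3p1:
  fixes a b :: ereal and w0 :: "real \<Rightarrow> real" and m :: nat
    and t :: "nat \<Rightarrow> real" and \<omega> :: "nat \<Rightarrow> real"
  assumes ab: "a < b"
    and w0_pos: "\<forall>x\<in>ivl a b. w0 x > 0"
    and w0_smooth: "\<forall>j. \<forall>x\<in>ivl a b. (deriv ^^ j) w0 differentiable (at x)"
    and moments: "\<forall>j::nat. set_integrable lborel (ivl a b) (\<lambda>x. x ^ j * w0 x)"
    and lim_a: "(a = -\<infinity> \<longrightarrow> (w0 \<longlongrightarrow> 0) at_bot) \<and>
                (a \<noteq> -\<infinity> \<longrightarrow> (w0 \<longlongrightarrow> 0) (at_right (real_of_ereal a)))"
    and lim_b: "(b = \<infinity> \<longrightarrow> (w0 \<longlongrightarrow> 0) at_top) \<and>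
                (b \<noteq> \<infinity> \<longrightarrow> (w0 \<longlongrightarrow> 0) (at_left (real_of_ereal b)))"
    and m1: "m \<ge> 1"
    and t_in: "\<forall>k\<in>{1..m}. t k \<in> ivl a b"
    and t_mono: "\<forall>k\<in>{1..m}. \<forall>l\<in>{1..m}. k < l \<longrightarrow> t k < t l"
    and \<omega>_sums: "\<forall>l\<le>m. (\<Sum>k=0..l. \<omega> k) \<ge> 0"
    and nonzero: "\<exists>x\<in>ivl a b. wt w0 \<omega> m t x \<noteq> 0"
  shows "\<forall>k\<in>{1..m}.
     (\<forall>n. ((\<lambda>s. ln (hn a b (wt w0 \<omega> m (t(k := s))) n)) has_real_derivative
              (- RR a b w0 \<omega> m t n k)) (at (t k))) \<and>
     (\<forall>n\<ge>1. ((\<lambda>s. pc a b (wt w0 \<omega> m (t(k := s))) n) has_real_derivative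
              (rr a b w0 \<omega> m t n k)) (at (t k))) \<and>
     (\<forall>n\<ge>1. ((\<lambda>s. ln (beta a b (wt w0 \<omega> m (t(k := s))) n)) has_real_derivative
              (RR a b w0 \<omega> m t (n - 1) k - RR a b w0 \<omega> m t n k)) (at (t k))) \<and>
     (\<forall>n. ((\<lambda>s. alpha a b (wt w0 \<omega> m (t(k := s))) n) has_real_derivative
              (rr a b w0 \<omega> m t n k - rr a b w0 \<omega> m t (n + 1) k)) (at (t k)))"
proof (intro ballI)
  fix k assume k: "k \<in> {1..m}"
  obtain S \<mu> c where ms: "msetup \<mu> c (t k) S" and cdef: "c = \<omega> k * w0 (t k)"
    and \<mu>def: "\<And>s i. \<mu> s i = ip a b (wt w0 \<omega> m (t(k := s))) (\<lambda>x. x ^ i)"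
    and mi: "\<And>s i. set_integrable lborel (ivl a b) (\<lambda>x. x ^ i * wt w0 \<omega> m (t(k := s)) x)"
    using main_k[OF w0_pos w0_smooth moments t_in t_mono \<omega>_sums nonzero k] by blast
  interpret msetup \<mu> c "t k" S by (rule ms)
  define W where "W s = wt w0 \<omega> m (t(k := s))" for s
  have Wt: "W (t k) = wt w0 \<omega> m t" by (simp add: W_def)
  have \<mu>fun: "(\<lambda>i. ip a b (W s) (\<lambda>x. x ^ i)) = \<mu> s" for s
    by (rule ext) (simp add: \<mu>def W_def)
  have miW: "\<And>i. set_integrable lborel (ivl a b) (\<lambda>x. x ^ i * W s x)" for s
    unfolding W_def by (rule mi)
  have OPs: "OP a b (W s) n = GS (\<mu> s) n" if "s \<in> S" for s n
    using OP_eq[OF miW, of s] pdS[OF that] unfolding \<mu>fun by blast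
  have hns: "hn a b (W s) n = Lf (\<mu> s) (GS (\<mu> s) n * GS (\<mu> s) n)" if "s \<in> S" for s n
    unfolding hn_def ip_Lf2[OF miW] \<mu>fun OPs[OF that] ..
  have pcs: "pc a b (W s) n = (if n = 0 then 0 else coeff (GS (\<mu> s) n) (n - 1))" if "s \<in> S" for s n
    unfolding pc_def OPs[OF that] ..
  have Hs: "Lf (\<mu> s) (GS (\<mu> s) n * GS (\<mu> s) n) > 0" if "s \<in> S" for s n
    using pdS[OF that] GS_nz unfolding PD_def by blast
  have tS: "t k \<in> S" by (rule S(2))
  have RReq: "RR a b w0 \<omega> m t n k = c * (poly (GS (\<mu> (t k)) n) (t k))\<^sup>2 / Lf (\<mu> (t k)) (GS (\<mu> (t k)) n * GS (\<mu> (t k)) n)" for n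
    unfolding RR_def cdef Wt[symmetric] OPs[OF tS] hns[OF tS] ..
  have rreq: "rr a b w0 \<omega> m t n k = (if n = 0 then 0 else c * poly (GS (\<mu> (t k)) n) (t k) * poly (GS (\<mu> (t k)) (n - 1)) (t k) / Lf (\<mu> (t k)) (GS (\<mu> (t k)) (n - 1) * GS (\<mu> (t k)) (n - 1)))" for n
    unfolding rr_def cdef Wt[symmetric] OPs[OF tS] hns[OF tS] ..
  have A: "((\<lambda>s. ln (hn a b (W s) n)) has_real_derivative (- RR a b w0 \<omega> m t n k)) (at (t k))" for n
  proof -
    have "((\<lambda>s. ln (Lf (\<mu> s) (GS (\<mu> s) n * GS (\<mu> s) n))) has_real_derivative
        (1 / Lf (\<mu> (t k)) (GS (\<mu> (t k)) n * GS (\<mu> (t k)) n) * (- c * (poly (GS (\<mu> (t k)) n) (t k))\<^sup>2))) (at (t k))"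
      by (rule DERIV_chain2[OF DERIV_ln_divide[OF Hs[OF tS]] H_deriv])
    then have "((\<lambda>s. ln (Lf (\<mu> s) (GS (\<mu> s) n * GS (\<mu> s) n))) has_real_derivative (- RR a b w0 \<omega> m t n k)) (at (t k))"
      unfolding RReq by (simp add: field_simps)
    then show ?thesis
      by (rule has_field_derivative_transform_within_open[OF _ S(1) tS]) (simp add: hns)
  qed
  have B: "((\<lambda>s. pc a b (W s) n) has_real_derivative (rr a b w0 \<omega> m t n k)) (at (t k))" for n
  proof (cases "n = 0")
    case True
    have "((\<lambda>s. 0) has_real_derivative (rr a b w0 \<omega> m t n k)) (at (t k))"
      using True by (simp add: rr_def)
    then show ?thesis
      by (rule has_field_derivative_transform_within_open[OF _ S(1) tS]) (simp add: pcs True)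
  next
    case False
    then have "((\<lambda>s. coeff (GS (\<mu> s) n) (n - 1)) has_real_derivative (rr a b w0 \<omega> m t n k)) (at (t k))"
      using p_deriv[of n] unfolding rreq by simp
    then show ?thesis
      by (rule has_field_derivative_transform_within_open[OF _ S(1) tS]) (simp add: pcs False)
  qed
  have C: "((\<lambda>s. ln (beta a b (W s) n)) has_real_derivative
      (RR a b w0 \<omega> m t (n - 1) k - RR a b w0 \<omega> m t n k)) (at (t k))" if n: "n \<ge> 1" for n
  proof -
    have "((\<lambda>s. ln (hn a b (W s) n) - ln (hn a b (W s) (n - 1))) has_real_derivative
        (- RR a b w0 \<omega> m t n k - (- RR a b w0 \<omega> m t (n - 1) k))) (at (t k))"
      by (rule DERIV_diff[OF A A])
    then have "((\<lambda>s. ln (hn a b (W s) n) - ln (hn a b (W s) (n - 1))) has_real_derivative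
        (RR a b w0 \<omega> m t (n - 1) k - RR a b w0 \<omega> m t n k)) (at (t k))"
      by simp
    then show ?thesis
    proof (rule has_field_derivative_transform_within_open[OF _ S(1) tS])
      fix s assume s: "s \<in> S"
      show "ln (hn a b (W s) n) - ln (hn a b (W s) (n - 1)) = ln (beta a b (W s) n)"
        unfolding beta_def using Hs[OF s, of n] Hs[OF s, of "n - 1"] by (simp add: hns[OF s] ln_div)
    qed
  qed
  have D: "((\<lambda>s. alpha a b (W s) n) has_real_derivative
      (rr a b w0 \<omega> m t n k - rr a b w0 \<omega> m t (n + 1) k)) (at (t k))" for n
    unfolding alpha_def by (rule DERIV_diff[OF B B])
  show "(\<forall>n. ((\<lambda>s. ln (hn a b (wt w0 \<omega> m (t(k := s))) n)) has_real_derivative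
              (- RR a b w0 \<omega> m t n k)) (at (t k))) \<and>
     (\<forall>n\<ge>1. ((\<lambda>s. pc a b (wt w0 \<omega> m (t(k := s))) n) has_real_derivative
              (rr a b w0 \<omega> m t n k)) (at (t k))) \<and>
     (\<forall>n\<ge>1. ((\<lambda>s. ln (beta a b (wt w0 \<omega> m (t(k := s))) n)) has_real_derivative
              (RR a b w0 \<omega> m t (n - 1) k - RR a b w0 \<omega> m t n k)) (at (t k))) \<and>
     (\<forall>n. ((\<lambda>s. alpha a b (wt w0 \<omega> m (t(k := s))) n) has_real_derivative
              (rr a b w0 \<omega> m t n k - rr a b w0 \<omega> m t (n + 1) k)) (at (t k)))"
    using A B C D unfolding W_def by blast
qed


end
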